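(* Let $U(a,x)=\sum_{n\ge1}u_{2n}(a)x^n$ with coefficients $u_{2n}(a)$ defined below (for $a\notin i\mathbb{Z}$ this is a solution of $(\delta_x^2+a^2)U=x(1+U)^3+(\delta_xU)^2-U\delta_x^2U$, $\delta_x=x\,d/dx$). Then for $a\in\mathbb{R}$ and $z$ fixed in a neighbourhood of $0$, $$U(a,a^2z)\sim\sum_{k=0}^\infty\frac{A_k(z)}{a^{2k}}\qquad (a\to+\infty)$$ as an asymptotic expansion in powers of $a^{-2}$, where the $A_k(z)$ are defined below.
   Context: Coefficients: $(a^2+1)u_2=1$ and for $n\ge2$: $(a^2+n^2)u_{2n}=3u_{2(n-1)}+3\sum_{j_1+j_2=n-1}u_{2j_1}u_{2j_2}+\sum_{j_1+j_2+j_3=n-1}u_{2j_1}u_{2j_2}u_{2j_3}-\sum_{1\le j_1,\,2j_1<n}(n-2j_1)^2u_{2j_1}u_{2(n-j_1)}$, all indices $j_i\ge1$. The functions $A_k(z)$, holomorphic in $|z|<4/27$: $A_0$ is the unique holomorphic solution near $0$ of $z(1+A_0)^3=A_0$ with $A_0(0)=0$, and $(A_k)_{k\ge0}$ is the unique sequence of functions holomorphic in $|z|<4/27$ such that $\sum_kA_k(z)a^{-2k}$ formally solves $a^2(z(1+A)^3-A)=(1+A)\delta_z^2A-(\delta_zA)^2$, $\delta_z=z\,d/dz$. *)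

theory Defs
  imports "HOL-Analysis.Analysis" "HOL-Computational_Algebra.Formal_Power_Series"
begin

text \<open>Coefficients: uc a n stands for u_{2n}(a) (with u_0 := 0, which is harmless since
  all indices in the recurrence are >= 1).\<close>

fun uc :: "real \<Rightarrow> nat \<Rightarrow> real" where
  "uc a 0 = 0"
| "uc a (Suc 0) = 1 / (a^2 + 1)"
| "uc a (Suc (Suc m)) =
     (3 * uc a (Suc m)
      + 3 * (\<Sum>j\<in>{1..<Suc m}. uc a j * uc a (Suc m - j))
      + (\<Sum>j1\<in>{1..<Suc m}. \<Sum>j2\<in>{1..<Suc m - j1}.
            uc a j1 * uc a j2 * uc a (Suc m - j1 - j2))
      - (\<Sum>j\<in>{j. 1 \<le> j \<and> 2 * j < Suc (Suc m)}.
            (real (Suc (Suc m)) - 2 * real j)^2 * uc a j * uc a (Suc (Suc m) - j)))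
     / (a^2 + (real (Suc (Suc m)))^2)"

definition U :: "real \<Rightarrow> complex \<Rightarrow> complex" where
  "U a x = (\<Sum>n. complex_of_real (uc a n) * x ^ n)"

definition delta :: "(complex \<Rightarrow> complex) \<Rightarrow> complex \<Rightarrow> complex" where
  "delta f z = z * deriv f z"

text \<open>The characterisation of the sequence (A_k): holomorphic in |z| < 4/27, A_0(0) = 0,
  and sum_k A_k eps^k (eps = a^{-2}) formally solves
  a^2 (z(1+A)^3 - A) = (1+A) delta^2 A - (delta A)^2, i.e. after multiplying by eps:
  z(1+A)^3 - A = eps ((1+A) delta^2 A - (delta A)^2) as formal power series in eps.\<close>
definition A_seq :: "(nat \<Rightarrow> complex \<Rightarrow> complex) \<Rightarrow> bool" where
  "A_seq A \<longleftrightarrow>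
     (\<forall>k. A k holomorphic_on ball 0 (4/27)) \<and> A 0 0 = 0 \<and>
     (\<forall>z\<in>ball 0 (4/27).
        (let Af = Abs_fps (\<lambda>k. A k z);
             D1 = Abs_fps (\<lambda>k. delta (A k) z);
             D2 = Abs_fps (\<lambda>k. delta (delta (A k)) z)
         in fps_const z * (1 + Af)^3 - Af = fps_X * ((1 + Af) * D2 - D1^2)))"

end

theory Submission
  imports Defs "HOL-Complex_Analysis.Complex_Analysis" "HOL-Computational_Algebra.Polynomial"
begin



definition phi :: "real \<Rightarrow> nat \<Rightarrow> real" where
  "phi B n = B ^ n / (real n + 1) ^ 2"

lemma phi_pos: "B > 0 \<Longrightarrow> phi B n > 0"
  unfolding phi_def by simp

lemma phi_0 [simp]: "phi B 0 = 1"
  unfolding phi_def by simp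

lemma sq_sum_bound: "(\<Sum>j\<le>n. 1 / (real j + 1)^2) \<le> 2 - 1 / (real n + 1)"
proof (induction n)
  case 0 then show ?case by simp
next
  case (Suc n)
  have a: "(real n + 1) * (real n + 2) \<le> (real n + 2)^2" by (simp add: power2_eq_square)
  have "1 / (real (Suc n) + 1)^2 = 1 / (real n + 2)^2" by simp
  also have "\<dots> \<le> 1 / ((real n + 1) * (real n + 2))"
    by (rule divide_left_mono[OF a]) auto
  also have "\<dots> = 1/(real n + 1) - 1/(real (Suc n) + 1)"
    by (simp add: field_simps)
  finally have "1 / (real (Suc n) + 1)^2 \<le> 1/(real n + 1) - 1/(real (Suc n) + 1)" .
  with Suc show ?case by simp
qed

lemma sq_sum_bound2: "(\<Sum>j\<le>n. 1 / (real j + 1)^2) \<le> 2"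
  using sq_sum_bound[of n] by (smt (verit) divide_nonneg_nonneg of_nat_0_le_iff)

lemma sum_rev_atMost: "(\<Sum>j\<le>(n::nat). f (n - j)) = (\<Sum>j\<le>n. (f j :: real))"
  using sum.atLeastAtMost_rev[of f 0 n] by (simp add: atLeast0AtMost)

lemma conv_pure: "(\<Sum>j\<le>n. 1 / ((real j + 1)^2 * (real (n - j) + 1)^2)) \<le> 8 / (real n + 1)^2"
proof -
  have t: "1 / ((real j + 1)^2 * (real (n - j) + 1)^2)
      \<le> 2 * (1 / (real j + 1)^2 + 1 / (real (n - j) + 1)^2) / (real n + 2)^2" if "j \<le> n" for j
  proof -
    define x where "x = real j + 1"
    define y where "y = real (n - j) + 1"
    have xy: "x + y = real n + 2" using that by (simp add: x_def y_def of_nat_diff)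
    have xp: "x > 0" "y > 0" by (auto simp: x_def y_def)
    have xy0: "x + y \<noteq> 0" using xp by simp
    have "(1/x + 1/y) = (x + y) / (x * y)" using xp by (simp add: field_simps)
    hence "1 / (x * y) = (1/x + 1/y) / (x + y)" using xp xy0 by simp
    hence "1 / (x^2 * y^2) = (1/x + 1/y)^2 / (x+y)^2"
      by (metis power_divide power_mult_distrib power_one)
    also have "\<dots> \<le> 2 * (1/x^2 + 1/y^2) / (x+y)^2"
    proof (rule divide_right_mono)
      have id: "\<And>u v::real. 2*(u^2+v^2) - (u+v)^2 = (u-v)^2" by algebra
      have h: "(1/x + 1/y)^2 \<le> 2*((1/x)^2 + (1/y)^2)"
        using id[of "1/x" "1/y"] zero_le_power2[of "1/x-1/y"] by linarith
      thus "(1/x + 1/y)^2 \<le> 2 * (1/x^2 + 1/y^2)"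
        by (simp add: power_one_over)
    qed simp
    finally show ?thesis using xy by (simp add: x_def y_def add.commute)
  qed
  have "(\<Sum>j\<le>n. 1 / ((real j + 1)^2 * (real (n - j) + 1)^2))
     \<le> (\<Sum>j\<le>n. 2 * (1 / (real j + 1)^2 + 1 / (real (n - j) + 1)^2) / (real n + 2)^2)"
    by (rule sum_mono) (use t in auto)
  also have "\<dots> = 2 / (real n + 2)^2 * ((\<Sum>j\<le>n. 1 / (real j + 1)^2) + (\<Sum>j\<le>n. 1 / (real (n - j) + 1)^2))"
    by (simp add: sum_divide_distrib[symmetric] sum_distrib_left sum.distrib)
  also have "(\<Sum>j\<le>n. 1 / (real (n - j) + 1)^2) = (\<Sum>j\<le>n. 1 / (real j + 1)^2)"
    using sum_rev_atMost[of "\<lambda>j. 1 / (real j + 1)^2" n] by simp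
  also have "2 / (real n + 2)^2 * ((\<Sum>j\<le>n. 1 / (real j + 1)^2) + (\<Sum>j\<le>n. 1 / (real j + 1)^2))
      \<le> 2 / (real n + 2)^2 * 4"
    by (rule mult_left_mono) (use sq_sum_bound2[of n] in auto)
  also have "\<dots> = 8 / (real n + 2)^2" by simp
  also have "\<dots> \<le> 8 / (real n + 1)^2"
    by (rule divide_left_mono) (auto simp: power2_eq_square intro!: mult_mono)
  finally show ?thesis .
qed

lemma conv_bound:
  fixes a b :: "nat \<Rightarrow> real"
  assumes B: "B > 0"
    and ha: "\<And>j. j \<le> n \<Longrightarrow> 0 \<le> a j \<and> a j \<le> D * phi B j"
    and hb: "\<And>j. j \<le> n \<Longrightarrow> 0 \<le> b j \<and> b j \<le> E * phi B j"
  shows "(\<Sum>j\<le>n. a j * b (n - j)) \<le> 8 * D * E * phi B n"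
proof -
  have D: "D \<ge> 0" using ha[of 0] by auto
  have E: "E \<ge> 0" using hb[of 0] by auto
  have phinn: "\<And>j. 0 \<le> D * phi B j" using D phi_pos[OF B] by (simp add: less_imp_le)
  have "(\<Sum>j\<le>n. a j * b (n - j)) \<le> (\<Sum>j\<le>n. (D * phi B j) * (E * phi B (n - j)))"
    by (rule sum_mono, rule mult_mono) (use ha hb phinn in auto)
  also have "\<dots> = (\<Sum>j\<le>n. D * E * B^n * (1 / ((real j + 1)^2 * (real (n - j) + 1)^2)))"
  proof (rule sum.cong[OF refl])
    fix j assume "j \<in> {..n}"
    hence "B^j * B^(n-j) = B^n" by (simp add: power_add[symmetric])
    thus "D * phi B j * (E * phi B (n - j)) = D * E * B^n * (1 / ((real j + 1)^2 * (real (n - j) + 1)^2))"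
      unfolding phi_def by (simp add: field_simps)
  qed
  also have "\<dots> = D * E * B^n * (\<Sum>j\<le>n. 1 / ((real j + 1)^2 * (real (n - j) + 1)^2))"
    by (simp add: sum_distrib_left)
  also have "\<dots> \<le> D * E * B^n * (8 / (real n + 1)^2)"
    by (rule mult_left_mono[OF conv_pure]) (use D E B in auto)
  also have "\<dots> = 8 * D * E * phi B n" unfolding phi_def by simp
  finally show ?thesis .
qed

lemma phi_shift: assumes "B > 0" "n \<ge> 1" shows "phi B (n - 1) \<le> 4 / B * phi B n"
proof -
  obtain m where n: "n = Suc m" using assms by (cases n) auto
  have "(real m + 2)^2 \<le> 4 * (real m + 1)^2" by (simp add: power2_eq_square field_simps)
  hence "B^m / (real m + 1)^2 \<le> 4 * B^m / (real m + 2)^2"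
    using assms by (simp add: field_simps)
  thus ?thesis using assms unfolding phi_def n by (simp add: field_simps)
qed

lemma four_pow: "(real n + 1)^2 \<le> 4 ^ n"
proof (induction n)
  case 0 then show ?case by simp
next
  case (Suc n)
  have "(real (Suc n) + 1)^2 \<le> 4 * (real n + 1)^2" by (simp add: power2_eq_square field_simps)
  with Suc show ?case by simp
qed

lemma eight_phi: assumes "B \<ge> 32" shows "8 ^ n \<le> phi B n"
proof -
  have "(real n + 1)^2 * 8^n \<le> 4^n * 8^n" by (rule mult_right_mono[OF four_pow]) simp
  also have "\<dots> = 32 ^ n" by (simp add: power_mult_distrib[symmetric])
  also have "\<dots> \<le> B ^ n" by (rule power_mono) (use assms in auto)
  finally show ?thesis unfolding phi_def by (simp add: field_simps)
qed




definition dl :: "complex fps \<Rightarrow> complex fps" where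
  "dl f = fps_X * fps_deriv f"

lemma dl_nth [simp]: "dl f $ n = of_nat n * f $ n"
  unfolding dl_def by (cases n) auto

lemma dl_add: "dl (f + g) = dl f + dl g"
  by (rule fps_ext) (simp add: algebra_simps)
lemma dl_diff: "dl (f - g) = dl f - dl g"
  by (rule fps_ext) (simp add: algebra_simps)
lemma dl_0 [simp]: "dl 0 = 0"
  by (rule fps_ext) simp
lemma dl_cmult: "dl (fps_const c * f) = fps_const c * dl f"
  by (rule fps_ext) (simp add: algebra_simps)

definition qf :: "complex fps \<Rightarrow> complex fps \<Rightarrow> complex fps" where
  "qf f g = f * dl (dl g) - dl f * dl g"

lemma qf_nth: "qf f g $ n = (\<Sum>j\<le>n. f$j * g$(n-j) * (of_nat (n-j)^2 - of_nat j * of_nat (n-j)))"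
  unfolding qf_def fps_sub_nth fps_mult_nth atLeast0AtMost[symmetric]
  by (simp add: sum_subtractf[symmetric] algebra_simps power2_eq_square)

lemma qf_bound: "cmod (qf f g $ n) \<le> real n ^ 2 * (\<Sum>j\<le>n. cmod (f$j) * cmod (g$(n-j)))"
proof -
  have "cmod (qf f g $ n) \<le> (\<Sum>j\<le>n. cmod (f$j * g$(n-j) * (of_nat (n-j)^2 - of_nat j * of_nat (n-j))))"
    unfolding qf_nth by (rule norm_sum)
  also have "\<dots> \<le> (\<Sum>j\<le>n. real n ^ 2 * (cmod (f$j) * cmod (g$(n-j))))"
  proof (rule sum_mono)
    fix j assume j: "j \<in> {..n}"
    have "(of_nat (n-j)^2 - of_nat j * of_nat (n-j) :: complex) = of_nat (n-j) * of_real (real n - 2 * real j)"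
      using j by (simp add: of_nat_diff power2_eq_square algebra_simps)
    hence "cmod (of_nat (n-j)^2 - of_nat j * of_nat (n-j) :: complex) = real (n-j) * \<bar>real n - 2 * real j\<bar>"
      by (simp only: norm_mult norm_of_nat norm_of_real)
    also have "\<dots> \<le> real n * real n"
      using j by (intro mult_mono) (auto simp: of_nat_diff)
    finally have c: "cmod (of_nat (n-j)^2 - of_nat j * of_nat (n-j) :: complex) \<le> real n ^ 2"
      by (simp add: power2_eq_square)
    show "cmod (f$j * g$(n-j) * (of_nat (n-j)^2 - of_nat j * of_nat (n-j))) \<le> real n ^ 2 * (cmod (f$j) * cmod (g$(n-j)))"
      unfolding norm_mult using c by (subst mult.commute, intro mult_right_mono) auto
  qed
  also have "\<dots> = real n ^ 2 * (\<Sum>j\<le>n. cmod (f$j) * cmod (g$(n-j)))"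
    by (simp add: sum_distrib_left)
  finally show ?thesis .
qed

definition EE :: "complex \<Rightarrow> complex fps \<Rightarrow> complex fps" where
  "EE e f = fps_X * (1+f)^3 - f - fps_const e * ((1+f) * dl (dl f) - (dl f)^2)"

lemma EE_alt: "EE e f = fps_X * (1+f)^3 - f - fps_const e * dl (dl f) - fps_const e * qf f f"
  unfolding EE_def qf_def by (simp add: algebra_simps power2_eq_square)

lemma EE_nth: "EE e f $ n = (if n = 0 then 0 else ((1+f)^3) $ (n-1)) - f$n - e * of_nat n ^ 2 * f$n - e * qf f f $ n"
  unfolding EE_alt by (simp add: power2_eq_square)

definition G :: "complex fps \<Rightarrow> bool" where
  "G f \<longleftrightarrow> ereal (1/7) \<le> fps_conv_radius f"

lemma G_add: "G f \<Longrightarrow> G g \<Longrightarrow> G (f + g)"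
  unfolding G_def by (rule order.trans[OF min.boundedI fps_conv_radius_add])
lemma G_diff: "G f \<Longrightarrow> G g \<Longrightarrow> G (f - g)"
  unfolding G_def by (rule order.trans[OF min.boundedI fps_conv_radius_diff])
lemma G_mult: "G f \<Longrightarrow> G g \<Longrightarrow> G (f * g)"
  unfolding G_def by (rule order.trans[OF min.boundedI fps_conv_radius_mult])
lemma G_power: "G f \<Longrightarrow> G (f ^ n)"
  unfolding G_def by (rule order.trans[OF _ fps_conv_radius_power])
lemma G_const: "G (fps_const c)"
  unfolding G_def by simp
lemma G_0: "G 0" unfolding G_def by simp
lemma G_1: "G 1" unfolding G_def by simp
lemma G_X: "G fps_X" unfolding G_def by simp
lemma G_dl: "G f \<Longrightarrow> G (dl f)"
proof -
  assume g: "G f"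
  have a: "fps_conv_radius f \<le> fps_conv_radius (fps_deriv f)" by (rule fps_conv_radius_deriv)
  have b: "min (fps_conv_radius (fps_X :: complex fps)) (fps_conv_radius (fps_deriv f)) \<le> fps_conv_radius (fps_X * fps_deriv f)"
    by (rule fps_conv_radius_mult)
  have c: "fps_conv_radius (fps_deriv f) \<le> fps_conv_radius (fps_X * fps_deriv f)" using b by simp
  show ?thesis using g unfolding G_def dl_def by (rule order.trans[OF order.trans[OF _ a] c])
qed
lemma G_sum: "(\<And>x. x \<in> A \<Longrightarrow> G (f x)) \<Longrightarrow> G (\<Sum>x\<in>A. f x)"
  by (induction A rule: infinite_finite_induct) (auto intro: G_add G_0)

lemma G_bound:
  assumes "G f"
  shows "\<exists>M\<ge>0. \<forall>n. cmod (f $ n) \<le> M * 8 ^ n"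
proof -
  have "norm (1/8 :: complex) < fps_conv_radius f"
    using assms unfolding G_def by (rule order.strict_trans2[rotated]) simp
  hence "summable (\<lambda>n. f $ n * (1/8 :: complex) ^ n)" by (rule summable_fps)
  hence "(\<lambda>n. f $ n * (1/8 :: complex) ^ n) \<longlonglongrightarrow> 0" by (rule summable_LIMSEQ_zero)
  hence "Bseq (\<lambda>n. f $ n * (1/8 :: complex) ^ n)" by (intro convergent_imp_Bseq convergentI)
  then obtain K where K: "K > 0" "\<And>n. norm (f $ n * (1/8 :: complex) ^ n) \<le> K"
    by (auto simp: Bseq_def)
  have "cmod (f $ n) \<le> K * 8 ^ n" for n
  proof -
    have "cmod (f $ n) / 8 ^ n \<le> K" using K(2)[of n] by (simp add: norm_mult norm_power norm_divide power_one_over)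
    thus ?thesis by (simp add: field_simps)
  qed
  thus ?thesis using K by (intro exI[of _ K]) auto
qed




lemma mult_bound:
  fixes f g :: "complex fps"
  assumes B: "B > 0"
    and hf: "\<And>j. j \<le> n \<Longrightarrow> cmod (f$j) \<le> D * phi B j"
    and hg: "\<And>j. j \<le> n \<Longrightarrow> cmod (g$j) \<le> E * phi B j"
  shows "cmod ((f*g)$n) \<le> 8 * D * E * phi B n"
proof -
  have "cmod ((f*g)$n) \<le> (\<Sum>j\<le>n. cmod (f$j) * cmod (g$(n-j)))"
    unfolding fps_mult_nth atLeast0AtMost
    by (rule order.trans[OF norm_sum]) (simp add: norm_mult)
  also have "\<dots> \<le> 8 * D * E * phi B n"
    by (rule conv_bound[OF B]) (use hf hg in auto)
  finally show ?thesis .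
qed

lemma vbound:
  fixes f :: "complex fps" and e B :: real
  assumes E: "EE (of_real e) f = 0" and f0: "f$0 = 0" and e: "e \<ge> 0" and B: "B \<ge> 128"
  shows "cmod (f$n) \<le> 4/B * phi B n"
proof (induction n rule: less_induct)
  case (less n)
  define D where "D = 4 / B"
  have Bp: "B > 0" using B by simp
  have D0: "D > 0" "D \<le> 1/32" using B by (auto simp: D_def field_simps)
  have IH: "\<And>j. j < n \<Longrightarrow> cmod (f$j) \<le> D * phi B j" using less D_def by auto
  show ?case
  proof (cases "n = 0")
    case True then show ?thesis using f0 phi_pos[OF Bp] Bp by simp
  next
    case False
    define T where "T = ((1+f)^3) $ (n-1)"
    have eq: "f$n * (1 + of_real e * of_nat n ^ 2) = T - of_real e * qf f f $ n"
      using arg_cong[OF E, of "\<lambda>F. F $ n"] False unfolding EE_nth T_def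
      by (simp add: algebra_simps)
    have "(\<Sum>j\<le>n. cmod (f$j) * cmod (f$(n-j))) =
         (\<Sum>j\<le>n. (if j < n then cmod (f$j) else 0) * (if n - j < n then cmod (f$(n-j)) else 0))"
    proof (rule sum.cong[OF refl])
      fix j assume "j \<in> {..n}"
      thus "cmod (f$j) * cmod (f$(n-j)) = (if j < n then cmod (f$j) else 0) * (if n - j < n then cmod (f$(n-j)) else 0)"
        using f0 False by (cases "j = 0") auto
    qed
    also have "\<dots> \<le> 8 * D * D * phi B n"
      by (rule conv_bound[OF Bp]) (use IH D0 phi_pos[OF Bp] in \<open>auto intro: less_imp_le\<close>)
    finally have qs: "(\<Sum>j\<le>n. cmod (f$j) * cmod (f$(n-j))) \<le> 8 * D * D * phi B n" .
    have qb: "cmod (qf f f $ n) \<le> real n ^ 2 * (8 * D * D * phi B n)"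
      by (rule order.trans[OF qf_bound]) (rule mult_left_mono[OF qs], simp)
    have qb2: "cmod (qf f f $ n) \<le> real n ^ 2 * (D * phi B n)"
    proof -
      have "8 * D * D * phi B n \<le> D * phi B n"
        using D0 phi_pos[OF Bp, of n] by (simp add: mult_right_mono)
      thus ?thesis by (rule order.trans[OF qb mult_left_mono[OF _ zero_le_power2]])
    qed
    have Tb: "cmod T \<le> D * phi B n"
    proof (cases "n = 1")
      case True
      hence "T = 1" unfolding T_def by (simp add: fps_power_zeroth f0)
      moreover have "D * phi B 1 = 1" unfolding D_def phi_def using Bp by simp
      ultimately show ?thesis using True by simp
    next
      case False
      define m where "m = n - 1"
      have m: "m \<ge> 1" "m < n" using \<open>n \<noteq> 0\<close> False by (auto simp: m_def)
      have id: "(1+f)^3 = 1 + 3 * f + 3 * f^2 + f^3" by (simp add: algebra_simps power2_eq_square power3_eq_cube)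
      have T: "T = 3 * f$m + 3 * (f^2)$m + (f^3)$m"
        unfolding T_def m_def[symmetric] id using m
        by (simp add: fps_mult_numeral_left)
      have hf: "\<And>j. j \<le> m \<Longrightarrow> cmod (f$j) \<le> D * phi B j" using IH m by auto
      have hf2: "\<And>j. j \<le> m \<Longrightarrow> cmod ((f^2)$j) \<le> (8 * D * D) * phi B j"
        unfolding power2_eq_square by (rule mult_bound[OF Bp]) (use hf in auto)
      have hf3: "cmod ((f^3)$m) \<le> 8 * D * (8 * D * D) * phi B m"
      proof -
        have "f^3 = f * f^2" by (simp add: power3_eq_cube power2_eq_square)
        thus ?thesis by (simp only:) (rule mult_bound[OF Bp], use hf hf2 in auto)
      qed
      have "cmod T \<le> 3 * cmod (f$m) + 3 * cmod ((f^2)$m) + cmod ((f^3)$m)"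
        unfolding T by (rule order.trans[OF norm_triangle_ineq] add_mono)+ (auto simp: norm_mult)
      also have "\<dots> \<le> 3 * (D * phi B m) + 3 * (8 * D * D * phi B m) + 8 * D * (8 * D * D) * phi B m"
        using hf[of m] hf2[of m] hf3 by auto
      also have "\<dots> = D * phi B m * (3 + 24 * D + 64 * D * D)" by (simp add: algebra_simps)
      also have "\<dots> \<le> D * phi B m * 4"
      proof (rule mult_left_mono)
        have "D * D \<le> 1/32 * (1/32)" using D0 by (intro mult_mono) auto
        thus "3 + 24 * D + 64 * D * D \<le> 4" using D0 by simp
      qed (use D0 phi_pos[OF Bp, of m] in simp)
      also have "\<dots> \<le> D * (4 / B * phi B n) * 4"
        using phi_shift[OF Bp, of n] D0 \<open>n \<noteq> 0\<close> unfolding m_def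
        by (intro mult_right_mono mult_left_mono) auto
      also have "\<dots> = D * phi B n * (16 / B)" by simp
      also have "\<dots> \<le> D * phi B n * 1"
        using D0 phi_pos[OF Bp, of n] B by (intro mult_left_mono) auto
      finally show ?thesis by simp
    qed
    have "cmod (f$n) * (1 + e * real n ^ 2) = cmod (f$n * (1 + of_real e * of_nat n ^ 2))"
    proof -
      have h: "(1 + of_real e * of_nat n ^ 2 :: complex) = of_real (1 + e * real n ^ 2)" by simp
      have "cmod (1 + of_real e * of_nat n ^ 2 :: complex) = 1 + e * real n ^ 2"
        unfolding h norm_of_real using e by simp
      thus ?thesis by (simp add: norm_mult)
    qed
    also have "\<dots> \<le> cmod T + e * cmod (qf f f $ n)"
      unfolding eq using e norm_triangle_ineq4[of T "of_real e * qf f f $ n"] by (simp add: norm_mult)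
    also have "\<dots> \<le> D * phi B n + e * (real n ^ 2 * (D * phi B n))"
      using Tb qb2 e by (intro add_mono mult_left_mono) auto
    also have "\<dots> = D * phi B n * (1 + e * real n ^ 2)" by (simp add: algebra_simps)
    finally have "cmod (f$n) * (1 + e * real n ^ 2) \<le> D * phi B n * (1 + e * real n ^ 2)" .
    moreover have "1 + e * real n ^ 2 > 0" using e by (simp add: add_pos_nonneg)
    ultimately have "cmod (f$n) \<le> D * phi B n" by (simp add: mult_le_cancel_right_pos)
    thus ?thesis unfolding D_def by simp
  qed
qed




lemma one_plus_bound:
  assumes B: "B > 0" and "\<And>j. cmod (f$j) \<le> D * phi B j"
  shows "cmod ((1 + f)$j) \<le> (1 + D) * phi B j"
proof (cases "j = 0")
  case True
  have "cmod ((1 + f)$0) \<le> 1 + cmod (f$0)" by (simp add: norm_triangle_ineq order.trans[OF norm_triangle_ineq])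
  with assms(2)[of 0] True show ?thesis by simp
next
  case False
  have "0 \<le> phi B j" using phi_pos[OF B] less_imp_le by blast
  thus ?thesis using assms(2)[of j] False by (simp add: algebra_simps)
qed

lemma w_identity:
  fixes v s R :: "complex fps"
  assumes "EE c v = 0" "EE c s = R"
  defines "w \<equiv> v - s"
  shows "w + fps_const c * dl (dl w) =
         fps_X * (w * ((1+v)^2 + (1+v)*(1+s) + (1+s)^2)) + R - fps_const c * (qf w v + qf s w)"
proof -
  have "w + fps_const c * dl (dl w) -
         (fps_X * (w * ((1+v)^2 + (1+v)*(1+s) + (1+s)^2)) + R - fps_const c * (qf w v + qf s w))
        = EE c s - EE c v - R"
    unfolding EE_alt qf_def w_def dl_diff by (simp add: algebra_simps power2_eq_square power3_eq_cube)
  thus ?thesis using assms by simp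
qed


lemma wbound:
  fixes v s R :: "complex fps" and e B Dr :: real
  assumes Ev: "EE (of_real e) v = 0" and Es: "EE (of_real e) s = R"
    and v0: "v$0 = 0" and s0: "s$0 = 0" and e: "e \<ge> 0" and B: "B \<ge> 16384"
    and vb: "\<And>n. cmod (v$n) \<le> 4/B * phi B n"
    and sb: "\<And>n. cmod (s$n) \<le> 5/B * phi B n"
    and Rb: "\<And>n. cmod (R$n) \<le> Dr * phi B n"
  shows "cmod ((v - s)$n) \<le> 2 * Dr * phi B n"
proof (induction n rule: less_induct)
  case (less n)
  define w where "w = v - s"
  define Gf where "Gf = (1+v)^2 + (1+v)*(1+s) + (1+s)^2"
  define Dw where "Dw = 2 * Dr"
  have Bp: "B > 0" using B by simp
  have phip: "\<And>j. phi B j > 0" using phi_pos[OF Bp] .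
  have Dr0: "Dr \<ge> 0" using Rb[of 0] norm_ge_zero[of "R$0"] by (simp del: norm_ge_zero)
  have IH: "\<And>j. j < n \<Longrightarrow> cmod (w$j) \<le> Dw * phi B j" using less by (simp add: w_def Dw_def)
  have w0: "w$0 = 0" using v0 s0 by (simp add: w_def)
  show ?case
  proof (cases "n = 0")
    case True then show ?thesis using v0 s0 phip[of 0] Dr0 by simp
  next
    case False
    have id: "w + fps_const (of_real e) * dl (dl w) =
         fps_X * (w * Gf) + R - fps_const (of_real e) * (qf w v + qf s w)"
      unfolding w_def Gf_def by (rule w_identity[OF Ev Es])
    have eq: "w$n * (1 + of_real e * of_nat n ^ 2) = (w * Gf)$(n-1) + R$n - of_real e * (qf w v $ n + qf s w $ n)"
      using arg_cong[OF id, of "\<lambda>F. F $ n"] False by (simp add: algebra_simps power2_eq_square)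
    have b1v: "\<And>j. cmod ((1+v)$j) \<le> (1 + 4/B) * phi B j" by (rule one_plus_bound[OF Bp vb])
    have b1s: "\<And>j. cmod ((1+s)$j) \<le> (1 + 5/B) * phi B j" by (rule one_plus_bound[OF Bp sb])
    have c1: "1 + 4/B \<le> 11/10" "1 + 5/B \<le> 11/10" using B by (auto simp: field_simps)
    have b1v': "\<And>j. cmod ((1+v)$j) \<le> 11/10 * phi B j"
      by (rule order.trans[OF b1v mult_right_mono[OF c1(1) less_imp_le[OF phip]]])
    have b1s': "\<And>j. cmod ((1+s)$j) \<le> 11/10 * phi B j"
      by (rule order.trans[OF b1s mult_right_mono[OF c1(2) less_imp_le[OF phip]]])
    have Gb: "cmod (Gf$j) \<le> 32 * phi B j" for j
    proof -
      have a: "cmod (((1+v)^2)$j) \<le> 8 * (11/10) * (11/10) * phi B j"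
        unfolding power2_eq_square by (rule mult_bound[OF Bp]) (use b1v' in auto)
      have b: "cmod (((1+v)*(1+s))$j) \<le> 8 * (11/10) * (11/10) * phi B j"
        by (rule mult_bound[OF Bp]) (use b1v' b1s' in auto)
      have c: "cmod (((1+s)^2)$j) \<le> 8 * (11/10) * (11/10) * phi B j"
        unfolding power2_eq_square by (rule mult_bound[OF Bp]) (use b1s' in auto)
      have "cmod (Gf$j) \<le> cmod (((1+v)^2)$j) + cmod (((1+v)*(1+s))$j) + cmod (((1+s)^2)$j)"
        unfolding Gf_def fps_add_nth by (rule order.trans[OF norm_triangle_ineq] add_mono)+ auto
      also have "\<dots> \<le> 3 * (8 * (11/10) * (11/10) * phi B j)" using a b c by simp
      also have "\<dots> \<le> 32 * phi B j" using phip[of j] by simp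
      finally show ?thesis .
    qed
    have wG: "cmod ((w * Gf)$(n-1)) \<le> 8 * Dw * 32 * phi B (n-1)"
      by (rule mult_bound[OF Bp]) (use IH False Gb in auto)
    also have "\<dots> \<le> 8 * Dw * 32 * (4 / B * phi B n)"
      using phi_shift[OF Bp, of n] False Dr0 unfolding Dw_def by (intro mult_left_mono) auto
    also have "\<dots> = Dw * phi B n * (1024 / B)" by simp
    also have "\<dots> \<le> Dw * phi B n * (1/16)"
      using B Dr0 phip[of n] unfolding Dw_def by (intro mult_left_mono) (auto simp: field_simps)
    finally have wGb: "cmod ((w * Gf)$(n-1)) \<le> Dw * phi B n / 16" by simp
    have hw: "\<And>j. j \<le> n \<Longrightarrow> 0 \<le> (if j < n then cmod (w$j) else 0) \<and> (if j < n then cmod (w$j) else 0) \<le> Dw * phi B j"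
      using IH Dr0 phip mult_nonneg_nonneg[OF Dr0 less_imp_le[OF phip]] unfolding Dw_def by auto
    have "(\<Sum>j\<le>n. cmod (w$j) * cmod (v$(n-j))) = (\<Sum>j\<le>n. (if j < n then cmod (w$j) else 0) * cmod (v$(n-j)))"
      by (rule sum.cong) (use v0 in auto)
    also have "\<dots> \<le> 8 * Dw * (4/B) * phi B n"
      by (rule conv_bound[OF Bp]) (use hw vb in auto)
    finally have q1: "(\<Sum>j\<le>n. cmod (w$j) * cmod (v$(n-j))) \<le> 8 * Dw * (4/B) * phi B n" .
    have "(\<Sum>j\<le>n. cmod (s$j) * cmod (w$(n-j))) = (\<Sum>j\<le>n. (if n - j < n then cmod (w$(n-j)) else 0) * cmod (s$j))"
    proof (rule sum.cong[OF refl])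
      fix j assume "j \<in> {..n}"
      thus "cmod (s$j) * cmod (w$(n-j)) = (if n - j < n then cmod (w$(n-j)) else 0) * cmod (s$j)"
        using s0 False by (cases "j = 0") auto
    qed
    also have "\<dots> = (\<Sum>j\<le>n. (if j < n then cmod (w$j) else 0) * cmod (s$(n-j)))"
      using sum_rev_atMost[of "\<lambda>j. (if j < n then cmod (w$j) else 0) * cmod (s$(n-j))" n]
      by (simp add: mult.commute)
    also have "\<dots> \<le> 8 * Dw * (5/B) * phi B n"
      by (rule conv_bound[OF Bp]) (use hw sb in auto)
    finally have q2: "(\<Sum>j\<le>n. cmod (s$j) * cmod (w$(n-j))) \<le> 8 * Dw * (5/B) * phi B n" .
    have "cmod (qf w v $ n + qf s w $ n) \<le> real n ^ 2 * (8 * Dw * (4/B) * phi B n) + real n ^ 2 * (8 * Dw * (5/B) * phi B n)"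
    proof -
      have a: "cmod (qf w v $ n) \<le> real n ^ 2 * (8 * Dw * (4/B) * phi B n)"
        by (rule order.trans[OF qf_bound], rule mult_left_mono[OF q1]) simp
      have b: "cmod (qf s w $ n) \<le> real n ^ 2 * (8 * Dw * (5/B) * phi B n)"
        by (rule order.trans[OF qf_bound], rule mult_left_mono[OF q2]) simp
      show ?thesis using a b norm_triangle_ineq[of "qf w v $ n" "qf s w $ n"] by linarith
    qed
    also have "\<dots> = real n ^ 2 * (Dw * phi B n) * (72 / B)" by (simp add: algebra_simps)
    also have "\<dots> \<le> real n ^ 2 * (Dw * phi B n) * 1"
      using B Dr0 phip[of n] unfolding Dw_def by (intro mult_left_mono) (auto simp: field_simps)
    finally have qb: "cmod (qf w v $ n + qf s w $ n) \<le> real n ^ 2 * (Dw * phi B n)" by simp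
    have "cmod (w$n) * (1 + e * real n ^ 2) = cmod (w$n * (1 + of_real e * of_nat n ^ 2))"
    proof -
      have h: "(1 + of_real e * of_nat n ^ 2 :: complex) = of_real (1 + e * real n ^ 2)" by simp
      have "cmod (1 + of_real e * of_nat n ^ 2 :: complex) = 1 + e * real n ^ 2"
        unfolding h norm_of_real using e by simp
      thus ?thesis by (simp add: norm_mult)
    qed
    also have "\<dots> \<le> cmod ((w * Gf)$(n-1)) + cmod (R$n) + e * cmod (qf w v $ n + qf s w $ n)"
    proof -
      let ?a = "(w * Gf)$(n-1)" and ?b = "R$n" and ?c = "qf w v $ n + qf s w $ n"
      have "cmod (?a + ?b - of_real e * ?c) \<le> cmod (?a + ?b) + cmod (of_real e * ?c)"
        by (rule norm_triangle_ineq4)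
      moreover have "cmod (?a + ?b) \<le> cmod ?a + cmod ?b" by (rule norm_triangle_ineq)
      moreover have "cmod (of_real e * ?c) = e * cmod ?c" using e by (simp add: norm_mult)
      ultimately show ?thesis unfolding eq by linarith
    qed
    also have "\<dots> \<le> Dw * phi B n / 16 + Dr * phi B n + e * (real n ^ 2 * (Dw * phi B n))"
      using wGb Rb[of n] qb e by (intro add_mono mult_left_mono) auto
    also have "\<dots> \<le> Dw * phi B n * (1 + e * real n ^ 2)"
      using Dr0 phip[of n] e unfolding Dw_def by (simp add: algebra_simps)
    finally have "cmod (w$n) * (1 + e * real n ^ 2) \<le> Dw * phi B n * (1 + e * real n ^ 2)" .
    moreover have "1 + e * real n ^ 2 > 0" using e by (simp add: add_pos_nonneg)
    ultimately have "cmod (w$n) \<le> Dw * phi B n" by (simp add: mult_le_cancel_right_pos)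
    thus ?thesis unfolding w_def Dw_def .
  qed
qed




lemma sum_drop_ends:
  fixes h :: "nat \<Rightarrow> real"
  assumes "h 0 = 0"
  shows "(\<Sum>i\<le>k. h i * h (k - i)) = (\<Sum>i\<in>{1..<k}. h i * h (k - i))"
  by (rule sum.mono_neutral_right) (use assms in \<open>auto simp: not_less Suc_le_eq\<close>)

lemma sum_drop_ends3:
  fixes h :: "nat \<Rightarrow> real"
  assumes "h 0 = 0"
  shows "(\<Sum>i\<le>k. h i * (\<Sum>l\<le>k-i. h l * h (k - i - l))) =
         (\<Sum>i\<in>{1..<k}. \<Sum>l\<in>{1..<k-i}. h i * h l * h (k - i - l))"
proof -
  have "(\<Sum>i\<le>k. h i * (\<Sum>l\<le>k-i. h l * h (k - i - l))) = (\<Sum>i\<le>k. h i * (\<Sum>l\<in>{1..<k-i}. h l * h (k - i - l)))"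
  proof (rule sum.cong[OF refl])
    fix i assume "i \<in> {..k}"
    show "h i * (\<Sum>l\<le>k-i. h l * h (k - i - l)) = h i * (\<Sum>l\<in>{1..<k-i}. h l * h (k - i - l))"
      using sum_drop_ends[of h "k - i", OF assms] by (simp only:)
  qed
  also have "\<dots> = (\<Sum>i\<in>{1..<k}. h i * (\<Sum>l\<in>{1..<k-i}. h l * h (k - i - l)))"
    by (rule sum.mono_neutral_right) (use assms in \<open>auto simp: not_less Suc_le_eq\<close>)
  also have "\<dots> = (\<Sum>i\<in>{1..<k}. \<Sum>l\<in>{1..<k-i}. h i * h l * h (k - i - l))"
    by (simp add: sum_distrib_left mult.assoc)
  finally show ?thesis .
qed

lemma sym_sum:
  fixes h :: "nat \<Rightarrow> real"
  assumes h0: "h 0 = 0"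
  shows "(\<Sum>j\<le>n. h j * h (n-j) * (real (n-j)^2 - real j * real (n-j))) =
         (\<Sum>j\<in>{j. 1 \<le> j \<and> 2 * j < n}. (real n - 2 * real j)^2 * h j * h (n - j))"
proof -
  define T where "T j = h j * h (n-j) * (real (n-j)^2 - real j * real (n-j))" for j
  define L0 where "L0 = {j. 2 * j < n}"
  define Mid where "Mid = {j::nat. 2 * j = n}"
  define H where "H = {j. j \<le> n \<and> n < 2 * j}"
  have fin: "finite L0" "finite Mid" "finite H" unfolding L0_def Mid_def H_def
    by (auto intro: finite_subset[of _ "{..n}"])
  have split: "{..n} = L0 \<union> Mid \<union> H" unfolding L0_def Mid_def H_def by auto
  have "(\<Sum>j\<le>n. T j) = (\<Sum>j\<in>L0. T j) + (\<Sum>j\<in>Mid. T j) + (\<Sum>j\<in>H. T j)"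
  proof -
    have d1: "L0 \<inter> Mid = {}" "(L0 \<union> Mid) \<inter> H = {}" unfolding L0_def Mid_def H_def by auto
    show ?thesis unfolding split
      using sum.union_disjoint[OF _ _ d1(2), of T] sum.union_disjoint[OF fin(1,2) d1(1), of T] fin by simp
  qed
  also have "(\<Sum>j\<in>Mid. T j) = 0"
    by (rule sum.neutral) (auto simp: Mid_def T_def of_nat_diff power2_eq_square)
  also have "(\<Sum>j\<in>H. T j) = (\<Sum>j\<in>L0. T (n - j))"
    by (rule sum.reindex_bij_witness[where i="\<lambda>j. n - j" and j="\<lambda>j. n - j"])
       (auto simp: L0_def H_def)
  finally have "(\<Sum>j\<le>n. T j) = (\<Sum>j\<in>L0. T j + T (n - j))" by (simp add: sum.distrib)
  also have "\<dots> = (\<Sum>j\<in>L0. (real n - 2 * real j)^2 * h j * h (n - j))"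
  proof (rule sum.cong[OF refl])
    fix j assume "j \<in> L0"
    hence j: "j \<le> n" by (auto simp: L0_def)
    have nn: "n - (n - j) = j" using j by simp
    show "T j + T (n - j) = (real n - 2 * real j)^2 * h j * h (n - j)"
      unfolding T_def nn using j by (simp add: of_nat_diff power2_eq_square algebra_simps)
  qed
  also have "\<dots> = (\<Sum>j\<in>{j. 1 \<le> j \<and> 2 * j < n}. (real n - 2 * real j)^2 * h j * h (n - j))"
    by (rule sum.mono_neutral_right) (use fin in \<open>auto simp: L0_def\<close>, use h0 in \<open>metis neq0_conv Suc_le_eq\<close>)
  finally show ?thesis unfolding T_def .
qed




definition vf :: "real \<Rightarrow> complex fps" where
  "vf a = Abs_fps (\<lambda>n. complex_of_real (uc a n * a^(2*n)))"

lemma vf_nth: "vf a $ n = complex_of_real (uc a n * a^(2*n))"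
  unfolding vf_def by simp

lemma pow_split: "i \<le> k \<Longrightarrow> (a::real)^(2*i) * a^(2*(k-i)) = a^(2*k)"
proof -
  assume "i \<le> k"
  hence "2*i + 2*(k-i) = 2*k" by simp
  thus ?thesis by (simp add: power_add[symmetric])
qed

lemma vf_sq: "(vf a * vf a) $ k = complex_of_real (a^(2*k) * (\<Sum>i\<le>k. uc a i * uc a (k-i)))"
proof -
  have "(vf a * vf a) $ k = (\<Sum>i\<le>k. complex_of_real (uc a i * a^(2*i) * (uc a (k-i) * a^(2*(k-i)))))"
    unfolding fps_mult_nth vf_nth atLeast0AtMost by simp
  also have "\<dots> = (\<Sum>i\<le>k. complex_of_real (a^(2*k) * (uc a i * uc a (k-i))))"
  proof (rule sum.cong[OF refl], rule arg_cong[where f=complex_of_real])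
    fix i assume "i \<in> {..k}"
    hence "i \<le> k" by simp
    have "uc a i * a^(2*i) * (uc a (k-i) * a^(2*(k-i))) = (uc a i * uc a (k-i)) * (a^(2*i) * a^(2*(k-i)))"
      by (simp add: ac_simps)
    thus "uc a i * a^(2*i) * (uc a (k-i) * a^(2*(k-i))) = a^(2*k) * (uc a i * uc a (k-i))"
      using pow_split[OF \<open>i \<le> k\<close>, of a] by simp
  qed
  also have "\<dots> = complex_of_real (a^(2*k) * (\<Sum>i\<le>k. uc a i * uc a (k-i)))"
    by (simp add: sum_distrib_left)
  finally show ?thesis .
qed

lemma vf_cube: "(vf a * (vf a * vf a)) $ k =
   complex_of_real (a^(2*k) * (\<Sum>i\<le>k. uc a i * (\<Sum>l\<le>k-i. uc a l * uc a (k-i-l))))"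
proof -
  have "(vf a * (vf a * vf a)) $ k = (\<Sum>i\<le>k. complex_of_real (uc a i * a^(2*i) * (a^(2*(k-i)) * (\<Sum>l\<le>k-i. uc a l * uc a (k-i-l)))))"
    unfolding fps_mult_nth[of "vf a"] vf_nth vf_sq atLeast0AtMost by simp
  also have "\<dots> = (\<Sum>i\<le>k. complex_of_real (a^(2*k) * (uc a i * (\<Sum>l\<le>k-i. uc a l * uc a (k-i-l)))))"
  proof (rule sum.cong[OF refl], rule arg_cong[where f=complex_of_real])
    fix i assume "i \<in> {..k}"
    hence "i \<le> k" by simp
    let ?Q = "(\<Sum>l\<le>k-i. uc a l * uc a (k-i-l))"
    have "uc a i * a^(2*i) * (a^(2*(k-i)) * ?Q) = (uc a i * ?Q) * (a^(2*i) * a^(2*(k-i)))"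
      by (simp add: ac_simps)
    thus "uc a i * a^(2*i) * (a^(2*(k-i)) * ?Q) = a^(2*k) * (uc a i * ?Q)"
      using pow_split[OF \<open>i \<le> k\<close>, of a] by simp
  qed
  also have "\<dots> = complex_of_real (a^(2*k) * (\<Sum>i\<le>k. uc a i * (\<Sum>l\<le>k-i. uc a l * uc a (k-i-l))))"
    by (simp add: sum_distrib_left)
  finally show ?thesis .
qed

lemma vf_qf: "qf (vf a) (vf a) $ n =
   complex_of_real (a^(2*n) * (\<Sum>j\<le>n. uc a j * uc a (n-j) * (real (n-j)^2 - real j * real (n-j))))"
proof -
  have "qf (vf a) (vf a) $ n = (\<Sum>j\<le>n. complex_of_real (uc a j * a^(2*j) * (uc a (n-j) * a^(2*(n-j))) * (real (n-j)^2 - real j * real (n-j))))"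
    unfolding qf_nth vf_nth by simp
  also have "\<dots> = (\<Sum>j\<le>n. complex_of_real (a^(2*n) * (uc a j * uc a (n-j) * (real (n-j)^2 - real j * real (n-j)))))"
  proof (rule sum.cong[OF refl], rule arg_cong[where f=complex_of_real])
    fix i assume "i \<in> {..n}"
    hence "i \<le> n" by simp
    let ?Q = "(real (n-i)^2 - real i * real (n-i))"
    have "uc a i * a^(2*i) * (uc a (n-i) * a^(2*(n-i))) * ?Q = (uc a i * uc a (n-i) * ?Q) * (a^(2*i) * a^(2*(n-i)))"
      by (simp add: ac_simps)
    thus "uc a i * a^(2*i) * (uc a (n-i) * a^(2*(n-i))) * ?Q = a^(2*n) * (uc a i * uc a (n-i) * ?Q)"
      using pow_split[OF \<open>i \<le> n\<close>, of a] by simp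
  qed
  also have "\<dots> = complex_of_real (a^(2*n) * (\<Sum>j\<le>n. uc a j * uc a (n-j) * (real (n-j)^2 - real j * real (n-j))))"
    by (simp add: sum_distrib_left)
  finally show ?thesis .
qed

lemma vf_0: "vf a $ 0 = 0" by (simp add: vf_nth)

lemma EE_v:
  assumes a: "a > 0"
  shows "EE (of_real (1/a^2)) (vf a) = 0"
proof (rule fps_ext)
  fix n
  define v where "v = vf a"
  define e where "e = 1/a^2"
  have a2: "a^2 > 0" using a by simp
  have h0: "uc a 0 = 0" by simp
  show "EE (of_real (1/a^2)) (vf a) $ n = 0 $ n"
  proof (cases n)
    case 0
    then show ?thesis unfolding EE_nth by (simp add: qf_nth vf_nth)
  next
    case (Suc k)
    note n = Suc
    show ?thesis
    proof (cases k)
      case 0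
      have q: "qf (vf a) (vf a) $ 1 = 0" by (simp add: qf_nth vf_nth)
      have c: "((1 + vf a)^3) $ 0 = 1" by (simp add: fps_power_zeroth vf_nth)
      have v1: "vf a $ 1 = complex_of_real (a^2 / (a^2+1))" by (simp add: vf_nth)
      have a3: "a^2 + 1 \<noteq> 0" "1 + a^2 \<noteq> 0" using a2 by (smt (verit))+
      have "1 - a^2 / (a^2+1) - 1/a^2 * (a^2/(a^2+1)) = (0::real)"
        using a2 a3 by (simp add: field_simps)
      hence "(1::complex) - of_real (a^2 / (a^2+1)) - of_real (1/a^2) * of_real (a^2/(a^2+1)) = 0"
        by (metis of_real_0 of_real_1 of_real_diff of_real_mult)
      then show ?thesis unfolding EE_nth n 0 using q c v1 by simp
    next
      case (Suc m)
      have nn: "n = Suc (Suc m)" using n Suc by simp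
      define P where "P = a^(2*(Suc m))"
      define S2 where "S2 = (\<Sum>j\<in>{1..<Suc m}. uc a j * uc a (Suc m - j))"
      define S3 where "S3 = (\<Sum>j1\<in>{1..<Suc m}. \<Sum>j2\<in>{1..<Suc m - j1}.
            uc a j1 * uc a j2 * uc a (Suc m - j1 - j2))"
      define Sq where "Sq = (\<Sum>j\<in>{j. 1 \<le> j \<and> 2 * j < Suc (Suc m)}.
            (real (Suc (Suc m)) - 2 * real j)^2 * uc a j * uc a (Suc (Suc m) - j))"
      have rec: "uc a n = (3 * uc a (Suc m) + 3 * S2 + S3 - Sq) / (a^2 + (real n)^2)"
        unfolding nn S2_def S3_def Sq_def by simp
      have id: "(1 + v)^3 = 1 + 3 * v + 3 * (v * v) + v * (v * v)"
        by (simp add: algebra_simps power3_eq_cube)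
      have sq: "(v * v) $ Suc m = of_real (P * S2)"
        unfolding v_def vf_sq P_def S2_def using sum_drop_ends[of "uc a" "Suc m"] by simp
      have cu: "(v * (v * v)) $ Suc m = of_real (P * S3)"
        unfolding v_def vf_cube P_def S3_def using sum_drop_ends3[of "uc a" "Suc m"] by simp
      have T: "((1+v)^3) $ (n - 1) = of_real (3 * (uc a (Suc m) * P) + 3 * (P * S2) + P * S3)"
        unfolding id nn using sq cu by (simp add: v_def vf_nth P_def fps_mult_numeral_left)
      have qq: "qf v v $ n = of_real (P * a^2 * Sq)"
      proof -
        have "qf v v $ n = of_real (a^(2*n) * Sq)"
          unfolding v_def vf_qf Sq_def nn using sym_sum[of "uc a" "Suc (Suc m)"] by simp
        moreover have "a^(2*n) = P * a^2" unfolding P_def nn by (simp add: power_add[symmetric])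
        ultimately show ?thesis by simp
      qed
      have vn: "v $ n = of_real (uc a n * (P * a^2))"
        unfolding v_def vf_nth P_def nn by (simp add: power_add[symmetric])
      have real_id: "3 * (uc a (Suc m) * P) + 3 * (P * S2) + P * S3 - uc a n * (P * a^2)
                - 1/a^2 * real n ^ 2 * (uc a n * (P * a^2)) - 1/a^2 * (P * a^2 * Sq) = 0"
      proof -
        have "uc a n * (a^2 + (real n)^2) = 3 * uc a (Suc m) + 3 * S2 + S3 - Sq"
          using rec a2 by (simp add: field_simps add_pos_nonneg)
        hence z: "3 * uc a (Suc m) + 3 * S2 + S3 - Sq - uc a n * (a^2 + real n^2) = 0" by simp
        have "3 * (uc a (Suc m) * P) + 3 * (P * S2) + P * S3 - uc a n * (P * a^2)
                - 1/a^2 * real n ^ 2 * (uc a n * (P * a^2)) - 1/a^2 * (P * a^2 * Sq)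
              = P * (3 * uc a (Suc m) + 3 * S2 + S3 - Sq - uc a n * (a^2 + real n^2))"
          using a2 by (simp add: field_simps)
        thus ?thesis using z by simp
      qed
      have "EE (of_real (1/a^2)) v $ n = of_real (3 * (uc a (Suc m) * P) + 3 * (P * S2) + P * S3 - uc a n * (P * a^2)
                - 1/a^2 * real n ^ 2 * (uc a n * (P * a^2)) - 1/a^2 * (P * a^2 * Sq))"
        unfolding EE_nth using T qq vn nn by simp
      hence "EE (of_real (1/a^2)) v $ n = 0" unfolding real_id by (simp only: of_real_0)
      thus ?thesis by (simp add: v_def)
    qed
  qed
qed




definition DL :: "complex fps fps \<Rightarrow> complex fps fps" where
  "DL P = Abs_fps (\<lambda>k. dl (P $ k))"

definition EF :: "complex fps fps \<Rightarrow> complex fps fps" where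
  "EF P = fps_const fps_X * (1+P)^3 - P - fps_X * ((1+P) * DL (DL P) - (DL P)^2)"

definition rel :: "(complex \<Rightarrow> complex fps) \<Rightarrow> complex fps fps \<Rightarrow> bool" where
  "rel \<phi> P \<longleftrightarrow> (\<forall>k. (\<lambda>z. \<phi> z $ k) has_fps_expansion P $ k)"

lemma rel_add: "rel \<phi> P \<Longrightarrow> rel \<psi> Q \<Longrightarrow> rel (\<lambda>z. \<phi> z + \<psi> z) (P + Q)"
  unfolding rel_def by (auto intro: has_fps_expansion_add)
lemma rel_diff: "rel \<phi> P \<Longrightarrow> rel \<psi> Q \<Longrightarrow> rel (\<lambda>z. \<phi> z - \<psi> z) (P - Q)"
  unfolding rel_def by (auto intro: has_fps_expansion_diff)
lemma rel_mult: "rel \<phi> P \<Longrightarrow> rel \<psi> Q \<Longrightarrow> rel (\<lambda>z. \<phi> z * \<psi> z) (P * Q)"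
  unfolding rel_def fps_mult_nth
  by (auto intro!: has_fps_expansion_sum has_fps_expansion_mult)
lemma rel_1: "rel (\<lambda>z. 1) 1"
  unfolding rel_def
proof
  fix k
  show "(\<lambda>z. (1::complex fps) $ k) has_fps_expansion (1::complex fps fps) $ k"
    by (cases k) (auto simp: fps_const_1_eq_1[symmetric] simp del: fps_const_1_eq_1)
qed
lemma rel_power: "rel \<phi> P \<Longrightarrow> rel (\<lambda>z. \<phi> z ^ n) (P ^ n)"
  by (induction n) (auto intro: rel_mult rel_1)
lemma rel_constz: "rel (\<lambda>z. fps_const z) (fps_const fps_X)"
  unfolding rel_def
proof
  fix k
  show "(\<lambda>z. fps_const z $ k) has_fps_expansion fps_const fps_X $ k"
    by (cases k) (auto intro: has_fps_expansion_fps_X)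
qed
lemma rel_X: "rel (\<lambda>z. fps_X) fps_X"
  unfolding rel_def
proof
  fix k
  show "(\<lambda>z. (fps_X :: complex fps) $ k) has_fps_expansion (fps_X :: complex fps fps) $ k"
    by (cases "k = 1") (auto simp: fps_X_def fps_const_1_eq_1[symmetric] simp del: fps_const_1_eq_1)
qed

lemma delta_eq: "delta f = (\<lambda>z. z * deriv f z)"
  by (rule ext) (simp add: delta_def)

lemma delta_exp: "f has_fps_expansion F \<Longrightarrow> delta f has_fps_expansion dl F"
  unfolding delta_eq dl_def
  by (intro has_fps_expansion_mult has_fps_expansion_fps_X has_fps_expansion_deriv)

lemma EF_zero:
  assumes "A_seq A"
  shows "EF (Abs_fps (\<lambda>k. fps_expansion (A k) 0)) = 0"
proof -
  define F where "F k = fps_expansion (A k) 0" for k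
  define AA where "AA = Abs_fps F"
  have hol: "\<And>k. A k holomorphic_on ball 0 (4/27)" using assms unfolding A_seq_def by auto
  have Fexp: "\<And>k. A k has_fps_expansion F k"
    unfolding F_def by (rule has_fps_expansion_fps_expansion[OF _ _ hol]) auto
  define Af where "Af z = Abs_fps (\<lambda>k. A k z)" for z
  define D1 where "D1 z = Abs_fps (\<lambda>k. delta (A k) z)" for z
  define D2 where "D2 z = Abs_fps (\<lambda>k. delta (delta (A k)) z)" for z
  define Phi where "Phi z = fps_const z * (1 + Af z)^3 - Af z - fps_X * ((1 + Af z) * D2 z - (D1 z)^2)" for z
  have r0: "rel Af AA" unfolding rel_def Af_def AA_def using Fexp by simp
  have r1: "rel D1 (DL AA)" unfolding rel_def D1_def AA_def DL_def using Fexp by (simp add: delta_exp)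
  have r2: "rel D2 (DL (DL AA))" unfolding rel_def D2_def AA_def DL_def using Fexp by (simp add: delta_exp)
  have rPhi: "rel Phi (EF AA)"
    unfolding Phi_def EF_def
    by (intro rel_diff rel_mult rel_power rel_add rel_1 rel_constz rel_X r0 r1 r2)
  have z0: "Phi z = 0" if "z \<in> ball 0 (4/27)" for z
    using assms that unfolding A_seq_def Phi_def Af_def D1_def D2_def Let_def by auto
  have "EF AA $ k = 0" for k
  proof -
    have ev: "eventually (\<lambda>z. Phi z $ k = 0) (nhds 0)"
    proof -
      have "eventually (\<lambda>z. z \<in> ball (0::complex) (4/27)) (nhds 0)"
        by (intro eventually_nhds_in_open) auto
      thus ?thesis by eventually_elim (simp add: z0)
    qed
    have e1: "(\<lambda>z. Phi z $ k) has_fps_expansion EF AA $ k" using rPhi unfolding rel_def by blast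
    have "(\<lambda>z. Phi z $ k) has_fps_expansion 0"
      using has_fps_expansion_cong[OF ev, of 0 0] by simp
    thus ?thesis using fps_expansion_unique_complex[OF e1] by simp
  qed
  hence "EF AA = 0" by (simp add: fps_eq_iff)
  thus ?thesis unfolding AA_def F_def .
qed




definition DLp :: "complex fps poly \<Rightarrow> complex fps poly" where
  "DLp P = map_poly dl P"

definition EP :: "complex fps poly \<Rightarrow> complex fps poly" where
  "EP P = [:fps_X:] * (1+P)^3 - P - [:0,1:] * ((1+P) * DLp (DLp P) - (DLp P)^2)"

lemma coeff_DLp: "coeff (DLp P) j = dl (coeff P j)"
  unfolding DLp_def by (rule coeff_map_poly) simp

lemma poly_DLp: "poly (DLp P) (fps_const c) = dl (poly P (fps_const c))"
proof (induction P rule: pCons_induct)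
  case 0 then show ?case by (simp add: DLp_def)
next
  case (pCons a p)
  have "DLp (pCons a p) = pCons (dl a) (DLp p)" unfolding DLp_def by (rule map_poly_pCons) simp
  then show ?case using pCons by (simp add: dl_add dl_cmult)
qed

lemma poly_EP: "poly (EP P) (fps_const c) = EE c (poly P (fps_const c))"
  unfolding EP_def EE_def by (simp add: poly_DLp)

definition agree :: "nat \<Rightarrow> complex fps poly \<Rightarrow> complex fps fps \<Rightarrow> bool" where
  "agree K P Q \<longleftrightarrow> (\<forall>j<K. coeff P j = Q $ j)"

lemma agree_add: "agree K P Q \<Longrightarrow> agree K P' Q' \<Longrightarrow> agree K (P + P') (Q + Q')"
  unfolding agree_def by simp
lemma agree_diff: "agree K P Q \<Longrightarrow> agree K P' Q' \<Longrightarrow> agree K (P - P') (Q - Q')"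
  unfolding agree_def by simp
lemma agree_mult: "agree K P Q \<Longrightarrow> agree K P' Q' \<Longrightarrow> agree K (P * P') (Q * Q')"
  unfolding agree_def coeff_mult fps_mult_nth atLeast0AtMost by (auto intro!: sum.cong)
lemma agree_1: "agree K 1 1"
  unfolding agree_def by (simp add: coeff_1)
lemma agree_power: "agree K P Q \<Longrightarrow> agree K (P ^ n) (Q ^ n)"
  by (induction n) (auto intro: agree_mult agree_1)
lemma agree_cX: "agree K [:fps_X:] (fps_const fps_X)"
  unfolding agree_def by (auto simp: coeff_pCons split: nat.splits)
lemma agree_X: "agree K [:0,1:] fps_X"
  unfolding agree_def by (auto simp: coeff_pCons fps_X_def split: nat.splits)
lemma agree_DL: "agree K P Q \<Longrightarrow> agree K (DLp P) (DL Q)"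
  unfolding agree_def by (simp add: coeff_DLp DL_def)

lemma agree_EP: "agree K P Q \<Longrightarrow> agree K (EP P) (EF Q)"
  unfolding EP_def EF_def
  by (intro agree_diff agree_mult agree_power agree_add agree_1 agree_cX agree_X agree_DL) auto

definition allG :: "complex fps poly \<Rightarrow> bool" where
  "allG P \<longleftrightarrow> (\<forall>j. G (coeff P j))"

lemma allG_add: "allG P \<Longrightarrow> allG Q \<Longrightarrow> allG (P + Q)"
  unfolding allG_def by (simp add: G_add)
lemma allG_diff: "allG P \<Longrightarrow> allG Q \<Longrightarrow> allG (P - Q)"
  unfolding allG_def by (simp add: G_diff)
lemma allG_mult: "allG P \<Longrightarrow> allG Q \<Longrightarrow> allG (P * Q)"
  unfolding allG_def coeff_mult by (auto intro!: G_sum G_mult)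
lemma allG_1: "allG 1"
  unfolding allG_def by (simp add: coeff_1 G_1 G_0)
lemma allG_power: "allG P \<Longrightarrow> allG (P ^ n)"
  by (induction n) (auto intro: allG_mult allG_1)
lemma allG_cX: "allG [:fps_X:]"
  unfolding allG_def by (auto simp: coeff_pCons G_X G_0 split: nat.splits)
lemma allG_X: "allG [:0,1:]"
  unfolding allG_def by (auto simp: coeff_pCons G_1 G_0 split: nat.splits)
lemma allG_DL: "allG P \<Longrightarrow> allG (DLp P)"
  unfolding allG_def by (simp add: coeff_DLp G_dl)
lemma allG_EP: "allG P \<Longrightarrow> allG (EP P)"
  unfolding EP_def
  by (intro allG_diff allG_mult allG_power allG_add allG_1 allG_cX allG_X allG_DL) auto

lemma poly_fps_const_nth:
  "(poly P (fps_const c)) $ n = (\<Sum>i\<le>degree P. (coeff P i) $ n * (c::complex) ^ i)"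
  by (subst poly_altdef) (simp add: fps_sum_nth)

lemma residual_bound:
  assumes AG: "allG P" and Z: "\<And>j. j < K \<Longrightarrow> coeff P j = 0" and B: "B \<ge> 32"
  shows "\<exists>M\<ge>0. \<forall>e n. 0 \<le> e \<longrightarrow> e \<le> 1 \<longrightarrow>
            cmod ((poly P (fps_const (complex_of_real e))) $ n) \<le> M * e ^ K * phi B n"
proof -
  have "\<forall>i. \<exists>M\<ge>0. \<forall>n. cmod (coeff P i $ n) \<le> M * 8 ^ n"
    using AG G_bound unfolding allG_def by blast
  then obtain Mf where Mf: "\<And>i. Mf i \<ge> 0" "\<And>i n. cmod (coeff P i $ n) \<le> Mf i * 8 ^ n"
    by metis
  define M where "M = (\<Sum>i\<le>degree P. Mf i)"
  have M0: "M \<ge> 0" unfolding M_def using Mf(1) by (simp add: sum_nonneg)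
  have "cmod ((poly P (fps_const (complex_of_real e))) $ n) \<le> M * e ^ K * phi B n"
    if e: "0 \<le> e" "e \<le> 1" for e n
  proof -
    have "cmod ((poly P (fps_const (complex_of_real e))) $ n)
        \<le> (\<Sum>i\<le>degree P. cmod ((coeff P i) $ n * complex_of_real e ^ i))"
      unfolding poly_fps_const_nth by (rule norm_sum)
    also have "\<dots> \<le> (\<Sum>i\<le>degree P. Mf i * e ^ K * phi B n)"
    proof (rule sum_mono)
      fix i assume "i \<in> {..degree P}"
      show "cmod ((coeff P i) $ n * complex_of_real e ^ i) \<le> Mf i * e ^ K * phi B n"
      proof (cases "i < K")
        case True then show ?thesis using Z[of i] Mf(1)[of i] e phi_pos[of B n] B by simp
      next
        case False
        have "cmod ((coeff P i) $ n * complex_of_real e ^ i) = cmod ((coeff P i) $ n) * e ^ i"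
          using e by (simp add: norm_mult norm_power)
        also have "\<dots> \<le> (Mf i * phi B n) * e ^ K"
        proof (rule mult_mono)
          show "cmod ((coeff P i) $ n) \<le> Mf i * phi B n"
            by (rule order.trans[OF Mf(2) mult_left_mono[OF eight_phi[OF B] Mf(1)]])
          show "e ^ i \<le> e ^ K" using False e by (simp add: power_decreasing)
        qed (use Mf(1)[of i] phi_pos[of B n] B e in auto)
        finally show ?thesis by (simp add: algebra_simps)
      qed
    qed
    also have "\<dots> = M * e ^ K * phi B n" unfolding M_def by (simp add: sum_distrib_right)
    finally show ?thesis .
  qed
  thus ?thesis using M0 by blast
qed




lemma tail_bound:
  fixes f :: "complex fps"
  assumes B: "B > 0" and fb: "\<And>n. cmod (f$n) \<le> D * phi B n" and z: "cmod z \<le> 1/(2*B)"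
  shows "summable (\<lambda>n. f$n * z^n)" "cmod (\<Sum>n. f$n * z^n) \<le> 2 * D"
proof -
  have D: "D \<ge> 0" using fb[of 0] norm_ge_zero[of "f$0"] by (simp del: norm_ge_zero)
  have phiB: "phi B n \<le> B^n" for n
  proof -
    have "1 \<le> (real n + 1)^2" by (simp add: one_le_power)
    hence "B^n * 1 \<le> B^n * (real n + 1)^2"
      using B by (intro mult_left_mono) auto
    thus ?thesis unfolding phi_def using B by (simp add: divide_le_eq)
  qed
  have hB: "B * (1/(2*B)) = 1/2" using B by simp
  have tb: "norm (f$n * z^n) \<le> D * (1/2)^n" for n
  proof -
    have "norm (f$n * z^n) = cmod (f$n) * cmod z ^ n" by (simp add: norm_mult norm_power)
    also have "\<dots> \<le> (D * B^n) * (1/(2*B))^n"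
    proof (rule mult_mono)
      show "cmod (f$n) \<le> D * B^n" by (rule order.trans[OF fb[of n] mult_left_mono[OF phiB D]])
      show "cmod z ^ n \<le> (1/(2*B))^n" using z by (intro power_mono) auto
    qed (use D B in auto)
    also have "\<dots> = D * (B * (1/(2*B)))^n" by (simp only: power_mult_distrib mult.assoc)
    also have "\<dots> = D * (1/2)^n" using hB by (simp only:)
    finally show ?thesis .
  qed
  have sg: "summable (\<lambda>n. D * (1/2::real)^n)" by (intro summable_mult summable_geometric) simp
  show "summable (\<lambda>n. f$n * z^n)"
    by (rule summable_comparison_test'[OF sg]) (use tb in auto)
  have "cmod (\<Sum>n. f$n * z^n) \<le> (\<Sum>n. D * (1/2::real)^n)"
    by (rule norm_suminf_le[OF tb sg])
  also have "\<dots> = 2 * D" using suminf_mult[of "\<lambda>n. (1/2::real)^n" D] suminf_geometric[of "1/2::real"]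
    by simp
  finally show "cmod (\<Sum>n. f$n * z^n) \<le> 2 * D" .
qed




theorem proposition8:
  fixes A :: "nat \<Rightarrow> complex \<Rightarrow> complex"
  assumes "A_seq A"
  shows "\<exists>r>0. \<forall>z. cmod z < r \<longrightarrow>
           (\<forall>\<^sub>F a in at_top. summable (\<lambda>n. complex_of_real (uc a n) * (complex_of_real (a^2) * z) ^ n)) \<and>
           (\<forall>K::nat. \<exists>C. \<forall>\<^sub>F a in at_top.
              cmod (U a (complex_of_real (a^2) * z) - (\<Sum>k<K. A k z / complex_of_real (a ^ (2*k))))
                \<le> C / a ^ (2*K))"
proof -
  define B :: real where "B = 16384"
  have Bp: "B > 0" "B \<ge> 128" "B \<ge> 32" "B \<ge> 16384" by (auto simp: B_def)
  define F where "F k = fps_expansion (A k) 0" for k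
  have hol: "\<And>k. A k holomorphic_on ball 0 (4/27)" using assms unfolding A_seq_def by auto
  have EF0: "EF (Abs_fps F) = 0" using EF_zero[OF assms] unfolding F_def by simp
  have Ak0: "A k 0 = 0" for k
  proof -
    have "fps_const 0 * (1 + Abs_fps (\<lambda>k. A k 0))^3 - Abs_fps (\<lambda>k. A k 0) =
          fps_X * ((1 + Abs_fps (\<lambda>k. A k 0)) * Abs_fps (\<lambda>k. delta (delta (A k)) 0) - (Abs_fps (\<lambda>k. delta (A k) 0))^2)"
    proof (rule bspec[where x=0])
      show "\<forall>z\<in>ball (0::complex) (4/27). fps_const z * (1 + Abs_fps (\<lambda>k. A k z))^3 - Abs_fps (\<lambda>k. A k z) =
          fps_X * ((1 + Abs_fps (\<lambda>k. A k z)) * Abs_fps (\<lambda>k. delta (delta (A k)) z) - (Abs_fps (\<lambda>k. delta (A k) z))^2)"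
        using assms unfolding A_seq_def Let_def by blast
    qed simp
    moreover have "Abs_fps (\<lambda>k. delta (delta (A k)) 0) = 0" "Abs_fps (\<lambda>k. delta (A k) 0) = 0"
      by (simp_all add: delta_def fps_eq_iff)
    ultimately have "Abs_fps (\<lambda>k. A k 0) = 0" by simp
    thus ?thesis by (simp add: fps_eq_iff)
  qed
  have F00: "F k $ 0 = 0" for k using Ak0 by (simp add: F_def fps_expansion_def)
  have EEF0: "EE (of_real 0) (F 0) = 0"
  proof -
    have "EF (Abs_fps F) $ 0 = fps_X * (1 + F 0)^3 - F 0"
      unfolding EF_def by (simp add: fps_power_zeroth)
    moreover have "EE (of_real 0) (F 0) = fps_X * (1 + F 0)^3 - F 0" by (simp add: EE_def)
    ultimately show ?thesis using EF0 by simp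
  qed
  have F0b: "cmod (F 0 $ n) \<le> 4/B * phi B n" for n
    by (rule vbound[OF EEF0 F00]) (use Bp in auto)
  have rad: "ereal (4/27) \<le> fps_conv_radius (F k)" for k
    unfolding F_def by (rule conv_radius_fps_expansion) (use hol in simp)
  have GF: "G (F k)" for k
    unfolding G_def by (rule order.trans[OF _ rad]) simp
  have "\<forall>k. \<exists>M\<ge>0. \<forall>n. cmod (F k $ n) \<le> M * 8 ^ n" using GF G_bound by blast
  then obtain Mf0 where Mf0: "\<And>k. Mf0 k \<ge> 0" "\<And>k n. cmod (F k $ n) \<le> Mf0 k * 8 ^ n" by metis
  have Mfb: "cmod (F k $ n) \<le> Mf0 k * phi B n" for k n
    by (rule order.trans[OF Mf0(2) mult_left_mono[OF eight_phi[OF Bp(3)] Mf0(1)]])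
  have Fsums: "(\<lambda>n. F k $ n * z^n) sums A k z" if "cmod z < 4/27" for k z
  proof -
    have "ereal (cmod z) < fps_conv_radius (F k)" 
    proof -
      have "ereal (cmod z) < ereal (4/27)" using that by simp
      thus ?thesis using rad[of k] by (rule order.strict_trans2)
    qed
    hence "(\<lambda>n. F k $ n * z^n) sums eval_fps (F k) z" by (rule sums_eval_fps)
    moreover have "eval_fps (F k) z = A k z"
      unfolding F_def using eval_fps_expansion'[of "A k" 0 "ereal (4/27)" z] hol that by simp
    ultimately show ?thesis by simp
  qed
  have vb: "cmod (vf a $ n) \<le> 4/B * phi B n" if "a > 0" for a n
    by (rule vbound[OF EE_v[OF that] vf_0]) (use Bp in auto)
  show ?thesis
  proof (rule exI[of _ "1/(2*B)"], intro conjI allI impI)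
    show "1/(2*B) > 0" using Bp by simp
    fix z :: complex
    assume z: "cmod z < 1/(2*B)"
    have z1: "cmod z \<le> 1/(2*B)" using z by simp
    have z2: "cmod z < 4/27" using z Bp by (simp add: B_def)
    have veq: "complex_of_real (uc a n) * (complex_of_real (a^2) * z)^n = vf a $ n * z^n" for a n
      by (simp add: vf_nth power_mult_distrib power_mult)
    show "\<forall>\<^sub>F a in at_top. summable (\<lambda>n. complex_of_real (uc a n) * (complex_of_real (a^2) * z) ^ n)"
      using eventually_gt_at_top[of "0::real"]
    proof eventually_elim
      case (elim a)
      show ?case unfolding veq by (rule tail_bound(1)[OF Bp(1) vb[OF elim] z1])
    qed
    fix K :: nat
    define S where "S = (\<Sum>k<K. monom (F k) k)"
    have coeffS: "coeff S j = (if j < K then F j else 0)" for j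
      unfolding S_def by (simp add: coeff_sum)
    have "agree K S (Abs_fps F)" unfolding agree_def coeffS by simp
    hence "agree K (EP S) (EF (Abs_fps F))" by (rule agree_EP)
    hence Z: "\<And>j. j < K \<Longrightarrow> coeff (EP S) j = 0" unfolding agree_def EF0 by simp
    have "allG S" unfolding allG_def coeffS using GF G_0 by simp
    hence "allG (EP S)" by (rule allG_EP)
    from residual_bound[OF this Z Bp(3)] obtain Mr where Mr: "Mr \<ge> 0"
      "\<And>e n. 0 \<le> e \<Longrightarrow> e \<le> 1 \<Longrightarrow> cmod ((poly (EP S) (fps_const (complex_of_real e))) $ n) \<le> Mr * e ^ K * phi B n"
      by blast
    define Ms where "Ms = (\<Sum>k<K. Mf0 k)"
    have Ms0: "Ms \<ge> 0" unfolding Ms_def using Mf0(1) by (simp add: sum_nonneg)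
    define e0 where "e0 = 1 / (B * (Ms + 1))"
    have BM: "B * (Ms + 1) \<ge> 1"
    proof -
      have "1 * 1 \<le> B * (Ms + 1)" using Bp Ms0 by (intro mult_mono) auto
      thus ?thesis by simp
    qed
    have e0: "e0 > 0" "e0 \<le> 1" "e0 * Ms \<le> 1/B"
    proof -
      show "e0 > 0" unfolding e0_def using BM by simp
      show "e0 \<le> 1" unfolding e0_def using BM by simp
      have "e0 * Ms = (1/B) * (Ms / (Ms + 1))" unfolding e0_def using Bp Ms0 by (simp add: field_simps)
      also have "\<dots> \<le> (1/B) * 1" using Bp Ms0 by (intro mult_left_mono) auto
      finally show "e0 * Ms \<le> 1/B" by simp
    qed
    have snth: "(poly S (fps_const c)) $ n = (\<Sum>k<K. F k $ n * c^k)" for c n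
      unfolding S_def by (simp add: poly_sum poly_monom fps_sum_nth)
    have s0: "(poly S (fps_const c)) $ 0 = 0" for c unfolding snth by (simp add: F00)
    have sb: "cmod ((poly S (fps_const (complex_of_real e))) $ n) \<le> 5/B * phi B n"
      if e: "0 \<le> e" "e \<le> e0" for e n
    proof (cases "K = 0")
      case True then show ?thesis using snth Bp phi_pos[of B n] by simp
    next
      case False
      have KK: "{..<K} = insert 0 {1..<K}" using False by auto
      have "(poly S (fps_const (complex_of_real e))) $ n = F 0 $ n + (\<Sum>k\<in>{1..<K}. F k $ n * complex_of_real e ^ k)"
        unfolding snth KK by simp
      hence "cmod ((poly S (fps_const (complex_of_real e))) $ n) \<le> cmod (F 0 $ n) + (\<Sum>k\<in>{1..<K}. cmod (F k $ n * complex_of_real e ^ k))"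
      proof -
        assume h: "(poly S (fps_const (complex_of_real e))) $ n = F 0 $ n + (\<Sum>k\<in>{1..<K}. F k $ n * complex_of_real e ^ k)"
        have "cmod (F 0 $ n + (\<Sum>k\<in>{1..<K}. F k $ n * complex_of_real e ^ k)) \<le> cmod (F 0 $ n) + cmod (\<Sum>k\<in>{1..<K}. F k $ n * complex_of_real e ^ k)"
          by (rule norm_triangle_ineq)
        also have "\<dots> \<le> cmod (F 0 $ n) + (\<Sum>k\<in>{1..<K}. cmod (F k $ n * complex_of_real e ^ k))"
          by (rule add_left_mono[OF norm_sum])
        finally show ?thesis unfolding h .
      qed
      also have "\<dots> \<le> 4/B * phi B n + (\<Sum>k\<in>{1..<K}. Mf0 k * phi B n * e)"
      proof (rule add_mono[OF F0b sum_mono])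
        fix k assume k: "k \<in> {1..<K}"
        have "cmod (F k $ n * complex_of_real e ^ k) = cmod (F k $ n) * e ^ k"
          using e by (simp add: norm_mult norm_power)
        also have "\<dots> \<le> (Mf0 k * phi B n) * e"
        proof (rule mult_mono[OF Mfb])
          show "e ^ k \<le> e" using k e e0 by (intro power_le_one_iff[THEN iffD2] | simp add: power_decreasing[of 1 k e, simplified])+
        qed (use Mf0(1)[of k] phi_pos[of B n] Bp e in auto)
        finally show "cmod (F k $ n * complex_of_real e ^ k) \<le> Mf0 k * phi B n * e" .
      qed
      also have "(\<Sum>k\<in>{1..<K}. Mf0 k * phi B n * e) \<le> (\<Sum>k<K. Mf0 k * phi B n * e)"
        by (rule sum_mono2) (use Mf0(1) phi_pos[of B n] Bp e in \<open>auto intro!: mult_nonneg_nonneg\<close>)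
      also have "(\<Sum>k<K. Mf0 k * phi B n * e) = Ms * e * phi B n"
      proof -
        have "(\<Sum>k<K. Mf0 k * phi B n * e) = (\<Sum>k<K. Mf0 k) * (phi B n * e)"
          by (simp add: sum_distrib_right mult.assoc)
        thus ?thesis unfolding Ms_def by (simp add: mult_ac)
      qed
      also have "Ms * e * phi B n \<le> 1/B * phi B n"
      proof (rule mult_right_mono)
        have "Ms * e \<le> Ms * e0" using Ms0 e by (intro mult_left_mono) auto
        thus "Ms * e \<le> 1/B" using e0 by (simp add: mult.commute)
      qed (use phi_pos[of B n] Bp in auto)
      finally show ?thesis by (simp add: algebra_simps)
    qed
    show "\<exists>C. \<forall>\<^sub>F a in at_top.
              cmod (U a (complex_of_real (a^2) * z) - (\<Sum>k<K. A k z / complex_of_real (a ^ (2*k))))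
                \<le> C / a ^ (2*K)"
    proof (intro exI[of _ "4 * Mr"])
      show "\<forall>\<^sub>F a in at_top.
              cmod (U a (complex_of_real (a^2) * z) - (\<Sum>k<K. A k z / complex_of_real (a ^ (2*k))))
                \<le> 4 * Mr / a ^ (2*K)"
        using eventually_ge_at_top[of "max 1 (1/e0)"]
      proof eventually_elim
        case (elim a)
        have a1: "a \<ge> 1" "a \<ge> 1/e0" using elim by auto
        have ap: "a > 0" using a1 by simp
        define e where "e = 1 / a^2"
        define c where "c = complex_of_real e"
        define s where "s = poly S (fps_const c)"
        have e_ge: "e \<ge> 0" unfolding e_def by simp
        have "a \<le> a^2" using a1 by (simp add: power2_eq_square)
        hence e_le: "e \<le> 1/a" unfolding e_def using ap by (simp add: frac_le)
        have "1/a \<le> e0" using a1 e0 by (simp add: field_simps)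
        hence e_e0: "e \<le> e0" using e_le by simp
        have e_1: "e \<le> 1" using e_e0 e0 by simp
        have Es: "EE (complex_of_real e) s = poly (EP S) (fps_const (complex_of_real e))"
          unfolding s_def c_def by (simp add: poly_EP)
        have wb: "cmod ((vf a - s)$n) \<le> 2 * (Mr * e ^ K) * phi B n" for n
        proof (rule wbound[OF _ Es])
          show "EE (complex_of_real e) (vf a) = 0" using EE_v[OF ap] by (simp add: e_def)
          show "vf a $ 0 = 0" by (rule vf_0)
          show "s $ 0 = 0" unfolding s_def by (rule s0)
          show "0 \<le> e" by (rule e_ge)
          show "16384 \<le> B" by (rule Bp(4))
          show "\<And>n. cmod (vf a $ n) \<le> 4/B * phi B n" by (rule vb[OF ap])
          show "\<And>n. cmod (s $ n) \<le> 5/B * phi B n" unfolding s_def c_def by (rule sb[OF e_ge e_e0])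
          show "\<And>n. cmod (poly (EP S) (fps_const (complex_of_real e)) $ n) \<le> Mr * e ^ K * phi B n"
            by (rule Mr(2)[OF e_ge e_1])
        qed
        have sv: "summable (\<lambda>n. vf a $ n * z^n)" by (rule tail_bound(1)[OF Bp(1) vb[OF ap] z1])
        have ss: "summable (\<lambda>n. s $ n * z^n)"
          by (rule tail_bound(1)[OF Bp(1) _ z1]) (unfold s_def c_def, rule sb[OF e_ge e_e0])
        have Uid: "U a (complex_of_real (a^2) * z) = (\<Sum>n. vf a $ n * z^n)"
          unfolding U_def veq ..
        have Aid: "(\<Sum>k<K. A k z / complex_of_real (a ^ (2*k))) = (\<Sum>n. s $ n * z^n)"
        proof -
          have "(\<Sum>k<K. A k z / complex_of_real (a ^ (2*k))) = (\<Sum>k<K. (\<Sum>n. F k $ n * z^n) * c^k)"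
          proof (rule sum.cong[OF refl])
            fix k assume "k \<in> {..<K}"
            have "complex_of_real (a ^ (2*k)) = inverse (c^k)"
              unfolding c_def e_def by (simp add: power_mult power_one_over field_simps power2_eq_square power_mult_distrib)
            thus "A k z / complex_of_real (a ^ (2*k)) = (\<Sum>n. F k $ n * z^n) * c^k"
              using sums_unique[OF Fsums[OF z2, of k]] by (simp add: divide_inverse)
          qed
          also have "\<dots> = (\<Sum>k<K. \<Sum>n. F k $ n * z^n * c^k)"
            by (rule sum.cong[OF refl], rule suminf_mult2) (use Fsums[OF z2] in \<open>auto simp: sums_iff\<close>)
          also have "\<dots> = (\<Sum>n. \<Sum>k<K. F k $ n * z^n * c^k)"
            by (rule suminf_sum[symmetric]) (use Fsums[OF z2] in \<open>auto simp: sums_iff intro: summable_mult2\<close>)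
          also have "\<dots> = (\<Sum>n. s $ n * z^n)"
            unfolding s_def snth by (simp add: sum_distrib_left sum_distrib_right mult_ac)
          finally show ?thesis .
        qed
        have eq: "U a (complex_of_real (a^2) * z) - (\<Sum>k<K. A k z / complex_of_real (a ^ (2*k)))
              = (\<Sum>n. (vf a - s) $ n * z^n)"
          unfolding Uid Aid using suminf_diff[OF sv ss] by (simp add: algebra_simps)
        have bd: "cmod (\<Sum>n. (vf a - s) $ n * z^n) \<le> 2 * (2 * (Mr * e ^ K))"
          by (rule tail_bound(2)[OF Bp(1) wb z1])
        have fe: "2 * (2 * (Mr * e ^ K)) = 4 * Mr / a ^ (2*K)"
          unfolding e_def by (simp add: power_mult power_one_over)
        show ?case unfolding eq using bd fe by simp
      qed
    qed
  qed
qed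


end
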